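(* The Schubert cell $S_{w_0,w_0}$ is the disjoint union of the following $G$-orbits of points $(P,Pw_0,Pw_0n)$: (i) for each $u\in\mathbb{R}^\times$, the orbit with $n=n(1,1,u)$, of dimension $8$ (the maximal dimension), these orbits being distinct for distinct $u$; (ii) three orbits of dimension $8$ with $n=n(0,1,1)$, $n(1,0,1)$, $n(1,1,0)$, each with trivial stabilizer; (iii) three orbits of dimension $7$: $n=n(1,0,0)$ with stabilizer $\{d(a,a,1/a^2):a\in\mathbb{R}^\times\}$, $n=n(0,1,0)$ with stabilizer $\{d(a,1/a^2,a):a\in\mathbb{R}^\times\}$, and $n=n(0,0,1)$ with stabilizer $\{d(1/a^2,a,a):a\in\mathbb{R}^\times\}$; (iv) one orbit of dimension $6$ with $n=n(0,0,0)$ and stabilizer $D$.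
   Context: $G=\mathrm{SL}_3(\mathbb{R})$, $P$ the upper triangular matrices in $G$, $D$ the diagonal matrices in $G$; $G$ acts on $X=(P\backslash G)^3$ by right multiplication in each coordinate. $n(x,y,z)=\begin{pmatrix}1&x&y\\0&1&z\\0&0&1\end{pmatrix}$, $d(a,b,c)=\operatorname{diag}(a,b,c)$. $w_0=\begin{pmatrix}0&0&-1\\0&-1&0\\-1&0&0\end{pmatrix}$. $S_{w_0,w_0}=\big(\{P\}\times P\backslash Pw_0P\times P\backslash Pw_0P\big)\cdot G$. The stabilizer of $(P,Pv,Pwn)$ is $P\cap v^{-1}Pv\cap (wn)^{-1}P(wn)$. *)

theory Defs
  imports "HOL-Analysis.Analysis"
begin

type_synonym mat3 = "real^3^3"

definition SL3 :: "mat3 set" where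
  "SL3 = {A. det A = 1}"

definition Pgrp :: "mat3 set" where
  "Pgrp = {A \<in> SL3. A$2$1 = 0 \<and> A$3$1 = 0 \<and> A$3$2 = 0}"

definition Dgrp :: "mat3 set" where
  "Dgrp = {A \<in> SL3. A$1$2 = 0 \<and> A$1$3 = 0 \<and> A$2$1 = 0 \<and> A$2$3 = 0 \<and> A$3$1 = 0 \<and> A$3$2 = 0}"

definition nmat :: "real \<Rightarrow> real \<Rightarrow> real \<Rightarrow> mat3" where
  "nmat x y z = vector [vector [1, x, y], vector [0, 1, z], vector [0, 0, 1]]"

definition dmat :: "real \<Rightarrow> real \<Rightarrow> real \<Rightarrow> mat3" where
  "dmat a b c = vector [vector [a, 0, 0], vector [0, b, 0], vector [0, 0, c]]"

definition w0 :: mat3 where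
  "w0 = vector [vector [0, 0, -1], vector [0, -1, 0], vector [-1, 0, 0]]"

definition coset :: "mat3 \<Rightarrow> mat3 set" where
  "coset g = (\<lambda>p. p ** g) ` Pgrp"

type_synonym point = "mat3 set \<times> mat3 set \<times> mat3 set"

definition Xspace :: "point set" where
  "Xspace = {(coset a, coset b, coset c) | a b c. a \<in> SL3 \<and> b \<in> SL3 \<and> c \<in> SL3}"

definition coset_act :: "mat3 set \<Rightarrow> mat3 \<Rightarrow> mat3 set" where
  "coset_act C g = (\<lambda>h. h ** g) ` C"

definition act :: "point \<Rightarrow> mat3 \<Rightarrow> point" where
  "act x g = (case x of (A, B, C) \<Rightarrow> (coset_act A g, coset_act B g, coset_act C g))"

definition orbit :: "point \<Rightarrow> point set" where
  "orbit x = {act x g | g. g \<in> SL3}"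

definition stab :: "point \<Rightarrow> mat3 set" where
  "stab x = {g \<in> SL3. act x g = x}"

text \<open>The Schubert cell S_{w0,w0} = ({P} x P\<backslash>Pw0P x P\<backslash>Pw0P) . G.\<close>
definition S_w0w0 :: "point set" where
  "S_w0w0 = {act (coset (mat 1), coset (w0 ** p), coset (w0 ** q)) g | p q g.
               p \<in> Pgrp \<and> q \<in> Pgrp \<and> g \<in> SL3}"

definition pt :: "mat3 \<Rightarrow> point" where
  "pt n = (coset (mat 1), coset w0, coset (w0 ** n))"

fun mpow :: "mat3 \<Rightarrow> nat \<Rightarrow> mat3" where
  "mpow A 0 = mat 1"
| "mpow A (Suc k) = A ** mpow A k"

definition mexp :: "mat3 \<Rightarrow> mat3" where
  "mexp A = (\<Sum>k. (1 / fact k) *\<^sub>R mpow A k)"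

definition lie_alg :: "mat3 set \<Rightarrow> mat3 set" where
  "lie_alg H = {X. \<forall>t::real. mexp (t *\<^sub>R X) \<in> H}"

definition group_dim :: "mat3 set \<Rightarrow> nat" where
  "group_dim H = dim (lie_alg H)"

definition orbit_dim :: "point \<Rightarrow> nat" where
  "orbit_dim x = group_dim SL3 - group_dim (stab x)"

end

theory Submission
  imports Defs
begin


definition m1 :: "mat3 \<Rightarrow> real" where
  "m1 A = (\<Sum>i\<in>UNIV. \<Sum>j\<in>UNIV. \<bar>A$i$j\<bar>)"

lemma m1_nonneg: "0 \<le> m1 A" unfolding m1_def by (intro sum_nonneg) auto

lemma norm_le_m1: "norm A \<le> m1 A"
proof -
  have "norm A \<le> (\<Sum>i\<in>UNIV. norm (A$i))"
    unfolding norm_vec_def by (rule L2_set_le_sum) auto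
  also have "\<dots> \<le> m1 A" unfolding m1_def
    by (intro sum_mono norm_le_l1_cart)
  finally show ?thesis .
qed

lemma m1_mult: "m1 (A ** B) \<le> m1 A * m1 B"
proof -
  have "m1 (A ** B) \<le> (\<Sum>i\<in>UNIV. \<Sum>j\<in>UNIV. \<Sum>k\<in>UNIV. \<bar>A$i$k\<bar> * \<bar>B$k$j\<bar>)"
    unfolding m1_def matrix_matrix_mult_def
    by (auto intro!: sum_mono simp: abs_mult[symmetric] intro: order_trans[OF sum_abs])
  also have "\<dots> = (\<Sum>i\<in>UNIV. \<Sum>k\<in>UNIV. \<Sum>j\<in>UNIV. \<bar>A$i$k\<bar> * \<bar>B$k$j\<bar>)"
    by (intro sum.cong refl sum.swap)
  also have "\<dots> \<le> (\<Sum>i\<in>UNIV. \<Sum>k\<in>UNIV. \<Sum>k'\<in>UNIV. \<Sum>j\<in>UNIV. \<bar>A$i$k\<bar> * \<bar>B$k'$j\<bar>)"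
  proof (rule sum_mono, rule sum_mono)
    fix i k
    have "(\<lambda>k'. \<Sum>j\<in>UNIV. \<bar>A$i$k\<bar> * \<bar>B$k'$j\<bar>) k \<le> sum (\<lambda>k'. \<Sum>j\<in>UNIV. \<bar>A$i$k\<bar> * \<bar>B$k'$j\<bar>) UNIV"
      by (rule member_le_sum) (auto intro: sum_nonneg)
    then show "(\<Sum>j\<in>UNIV. \<bar>A$i$k\<bar> * \<bar>B$k$j\<bar>) \<le> (\<Sum>k'\<in>UNIV. \<Sum>j\<in>UNIV. \<bar>A$i$k\<bar> * \<bar>B$k'$j\<bar>)"
      by simp
  qed
  also have "\<dots> = m1 A * m1 B"
    unfolding m1_def by (simp only: sum_distrib_right) (simp only: sum_distrib_left)
  finally show ?thesis .
qed

lemma m1_scale: "m1 (t *\<^sub>R A) = \<bar>t\<bar> * m1 A"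
  unfolding m1_def by (simp add: sum_distrib_left abs_mult)

lemma m1_one: "m1 (mat 1) = 3"
  unfolding m1_def by (simp add: sum_3 mat_def)

lemma mpow_bound: "m1 (mpow A k) \<le> 3 * m1 A ^ k"
proof (induction k)
  case 0 then show ?case by (simp add: m1_one)
next
  case (Suc k)
  have "m1 (mpow A (Suc k)) \<le> m1 A * m1 (mpow A k)" using m1_mult by simp
  also have "\<dots> \<le> m1 A * (3 * m1 A ^ k)" by (intro mult_left_mono Suc m1_nonneg)
  finally show ?case by (simp add: algebra_simps)
qed

lemma mpow_scale: "mpow (t *\<^sub>R A) k = t^k *\<^sub>R mpow A k"
  by (induction k) (auto simp: matrix_scalar_ac scalar_matrix_assoc[symmetric])

lemma mpow_bound': "norm ((1 / fact k) *\<^sub>R mpow A k) \<le> 3 * (inverse (fact k) * m1 A ^ k)"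
proof -
  have "norm ((1 / fact k) *\<^sub>R mpow A k) = (1 / fact k) * norm (mpow A k)" by simp
  also have "\<dots> \<le> (1 / fact k) * (3 * m1 A ^ k)"
    by (intro mult_left_mono order_trans[OF norm_le_m1 mpow_bound]) auto
  finally show ?thesis by (simp add: field_simps)
qed

lemma mexp_summable: "summable (\<lambda>k. (1 / fact k) *\<^sub>R mpow A k)"
  by (rule summable_comparison_test'[OF summable_mult[OF summable_exp] mpow_bound'])

lemma exp_real_sums: "(\<lambda>n. r^n / fact n) sums exp (r::real)"
  using exp_converges[of r] by (simp add: divide_inverse mult.commute)

lemma tail_bound:
  "norm (mexp (t *\<^sub>R X) - mat 1 - t *\<^sub>R X) \<le> 3 * (\<bar>t\<bar> * m1 X)^2 * exp (\<bar>t\<bar> * m1 X)"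
proof -
  define f where "f k = (1 / fact k) *\<^sub>R mpow (t *\<^sub>R X) k" for k
  define r where "r = \<bar>t\<bar> * m1 X"
  have r0: "0 \<le> r" unfolding r_def using m1_nonneg by simp
  have sf: "summable f" unfolding f_def by (rule mexp_summable)
  have "mexp (t *\<^sub>R X) = (\<Sum>n. f (n + 2)) + (\<Sum>i<2. f i)"
    unfolding mexp_def f_def[symmetric] by (rule suminf_split_initial_segment[OF sf])
  also have "(\<Sum>i<2. f i) = mat 1 + t *\<^sub>R X"
    by (simp add: f_def numeral_2_eq_2)
  finally have eq: "mexp (t *\<^sub>R X) - mat 1 - t *\<^sub>R X = (\<Sum>n. f (n + 2))" by simp
  have bd: "norm (f (n + 2)) \<le> 3 * r^2 * (r^n / fact n)" for n
  proof -
    have "norm (f (n+2)) \<le> 3 * (inverse (fact (n+2)) * m1 (t *\<^sub>R X) ^ (n+2))"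
      unfolding f_def by (rule mpow_bound')
    also have "\<dots> = 3 * r^2 * (r^n / fact (n+2))"
      by (simp add: m1_scale r_def power_add divide_inverse mult_ac power_mult_distrib power2_eq_square)
    also have "\<dots> \<le> 3 * r^2 * (r^n / fact n)"
      using r0 by (intro mult_left_mono divide_left_mono fact_mono mult_pos_pos fact_gt_zero) auto
    finally show ?thesis .
  qed
  have sg: "summable (\<lambda>n. 3 * r^2 * (r^n / fact n))"
    by (intro summable_mult sums_summable[OF exp_real_sums])
  have sn: "summable (\<lambda>n. norm (f (n + 2)))"
    by (rule summable_comparison_test'[OF sg]) (use bd in auto)
  have "norm (\<Sum>n. f (n + 2)) \<le> (\<Sum>n. norm (f (n + 2)))" by (rule summable_norm[OF sn])
  also have "\<dots> \<le> (\<Sum>n. 3 * r^2 * (r^n / fact n))" by (rule suminf_le[OF bd sn sg])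
  also have "\<dots> = 3 * r^2 * exp r"
    using sums_unique[OF sums_mult[OF exp_real_sums, of "3 * r^2" r]] by simp
  finally show ?thesis unfolding eq r_def .
qed

lemma mexp_lim: "((\<lambda>t. (1 / t) *\<^sub>R (mexp (t *\<^sub>R X) - mat 1)) \<longlongrightarrow> X) (at 0)"
proof -
  define m where "m = m1 X"
  have g: "((\<lambda>t. 3 * \<bar>t\<bar> * m^2 * exp (\<bar>t\<bar> * m)) \<longlongrightarrow> 3 * \<bar>0\<bar> * m^2 * exp (\<bar>0\<bar> * m)) (at (0::real))"
    by (intro tendsto_intros)
  have ev: "eventually (\<lambda>t. norm ((1 / t) *\<^sub>R (mexp (t *\<^sub>R X) - mat 1) - X) \<le> 3 * \<bar>t\<bar> * m^2 * exp (\<bar>t\<bar> * m)) (at 0)"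
    unfolding eventually_at_filter
  proof (intro always_eventually allI impI)
    fix t :: real assume "t \<noteq> 0"
    then have "(1 / t) *\<^sub>R (mexp (t *\<^sub>R X) - mat 1) - X = (1 / t) *\<^sub>R (mexp (t *\<^sub>R X) - mat 1 - t *\<^sub>R X)"
      by (simp add: algebra_simps)
    then have "norm ((1 / t) *\<^sub>R (mexp (t *\<^sub>R X) - mat 1) - X) = (1 / \<bar>t\<bar>) * norm (mexp (t *\<^sub>R X) - mat 1 - t *\<^sub>R X)"
      by simp
    also have "\<dots> \<le> (1 / \<bar>t\<bar>) * (3 * (\<bar>t\<bar> * m)^2 * exp (\<bar>t\<bar> * m))"
      unfolding m_def by (intro mult_left_mono tail_bound) auto
    also have "\<dots> = 3 * \<bar>t\<bar> * m^2 * exp (\<bar>t\<bar> * m)"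
      using \<open>t \<noteq> 0\<close> by (simp add: power2_eq_square field_simps)
    finally show "norm ((1 / t) *\<^sub>R (mexp (t *\<^sub>R X) - mat 1) - X) \<le> 3 * \<bar>t\<bar> * m^2 * exp (\<bar>t\<bar> * m)" .
  qed
  have "((\<lambda>t. (1 / t) *\<^sub>R (mexp (t *\<^sub>R X) - mat 1) - X) \<longlongrightarrow> 0) (at 0)"
    by (rule Lim_null_comparison[OF ev]) (use g in simp)
  then show ?thesis by (rule LIM_zero_cancel)
qed



lemmas mat_simps = vec_eq_iff forall_3 matrix_matrix_mult_def sum_3 dmat_def mat_def nmat_def w0_def

lemma mexp_lim_entry:
  "((\<lambda>t. (1 / t) * (mexp (t *\<^sub>R X) $ i $ j - mat 1 $ i $ j)) \<longlongrightarrow> X $ i $ j) (at 0)"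
proof -
  have "((\<lambda>t. ((1 / t) *\<^sub>R (mexp (t *\<^sub>R X) - mat 1)) $ i $ j) \<longlongrightarrow> X $ i $ j) (at 0)"
    by (intro tendsto_vec_nth mexp_lim)
  then show ?thesis by simp
qed

lemma lie_lin:
  fixes c1 c2 :: real
  assumes "\<And>t. c1 * mexp (t *\<^sub>R X) $ i $ j + c2 * mexp (t *\<^sub>R X) $ k $ l
                = c1 * mat 1 $ i $ j + c2 * mat 1 $ k $ l"
  shows "c1 * X $ i $ j + c2 * X $ k $ l = 0"
proof -
  have lim: "((\<lambda>t. c1 * ((1 / t) * (mexp (t *\<^sub>R X) $ i $ j - mat 1 $ i $ j))
             + c2 * ((1 / t) * (mexp (t *\<^sub>R X) $ k $ l - mat 1 $ k $ l)))
         \<longlongrightarrow> c1 * X $ i $ j + c2 * X $ k $ l) (at 0)"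
    by (intro tendsto_intros mexp_lim_entry)
  have "(\<lambda>t. c1 * ((1 / t) * (mexp (t *\<^sub>R X) $ i $ j - mat 1 $ i $ j))
             + c2 * ((1 / t) * (mexp (t *\<^sub>R X) $ k $ l - mat 1 $ k $ l))) = (\<lambda>t. 0)"
  proof
    fix t
    have "c1 * ((1 / t) * (mexp (t *\<^sub>R X) $ i $ j - mat 1 $ i $ j))
             + c2 * ((1 / t) * (mexp (t *\<^sub>R X) $ k $ l - mat 1 $ k $ l))
        = (1/t) * ((c1 * mexp (t *\<^sub>R X) $ i $ j + c2 * mexp (t *\<^sub>R X) $ k $ l)
                 - (c1 * mat 1 $ i $ j + c2 * mat 1 $ k $ l))"
      by (simp add: algebra_simps)
    also have "\<dots> = 0" using assms[of t] by simp
    finally show "c1 * ((1 / t) * (mexp (t *\<^sub>R X) $ i $ j - mat 1 $ i $ j))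
             + c2 * ((1 / t) * (mexp (t *\<^sub>R X) $ k $ l - mat 1 $ k $ l)) = 0" .
  qed
  with lim have "((\<lambda>t. 0) \<longlongrightarrow> c1 * X $ i $ j + c2 * X $ k $ l) (at (0::real))" by simp
  then show ?thesis using tendsto_unique[OF _ tendsto_const] by (metis at_neq_bot)
qed

lemma lie_entry0:
  assumes "\<And>t. mexp (t *\<^sub>R X) $ i $ j = 0" "i \<noteq> j"
  shows "X $ i $ j = 0"
  using lie_lin[of 1 X i j 0 i j] assms by (simp add: mat_def)

lemma lie_entry_eq:
  assumes "\<And>t. mexp (t *\<^sub>R X) $ i $ i = mexp (t *\<^sub>R X) $ j $ j"
  shows "X $ i $ i = X $ j $ j"
  using lie_lin[of 1 X i i "-1" j j] assms by (simp add: mat_def)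

lemma det_expand:
  fixes Y :: mat3
  shows "det (mat 1 + t *\<^sub>R Y) = 1 + t * (Y$1$1 + Y$2$2 + Y$3$3)
     + t^2 * (Y$1$1*Y$2$2 - Y$1$2*Y$2$1 + Y$1$1*Y$3$3 - Y$1$3*Y$3$1 + Y$2$2*Y$3$3 - Y$2$3*Y$3$2)
     + t^3 * det Y"
  by (simp add: det_3 mat_def power2_eq_square power3_eq_cube algebra_simps)

lemma lie_trace:
  assumes "\<And>t. det (mexp (t *\<^sub>R X)) = 1"
  shows "X$1$1 + X$2$2 + X$3$3 = 0"
proof -
  define Y where "Y t = (1 / t) *\<^sub>R (mexp (t *\<^sub>R X) - mat 1)" for t
  have YX: "(Y \<longlongrightarrow> X) (at 0)" unfolding Y_def by (rule mexp_lim)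
  define F where "F t = (Y t$1$1 + Y t$2$2 + Y t$3$3)
     + t * (Y t$1$1*Y t$2$2 - Y t$1$2*Y t$2$1 + Y t$1$1*Y t$3$3 - Y t$1$3*Y t$3$1 + Y t$2$2*Y t$3$3 - Y t$2$3*Y t$3$2)
     + t^2 * det (Y t)" for t
  have lim: "(F \<longlongrightarrow> (X$1$1 + X$2$2 + X$3$3)
     + 0 * (X$1$1*X$2$2 - X$1$2*X$2$1 + X$1$1*X$3$3 - X$1$3*X$3$1 + X$2$2*X$3$3 - X$2$3*X$3$2)
     + 0^2 * det X) (at 0)"
    unfolding F_def det_3 by (intro tendsto_intros YX)
  have "F t = 0" if "t \<noteq> 0" for t
  proof -
    have "mexp (t *\<^sub>R X) = mat 1 + t *\<^sub>R Y t" using that by (simp add: Y_def)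
    then have "1 = det (mat 1 + t *\<^sub>R Y t)" using assms[of t] by metis
    then have "t * F t = 0" unfolding det_expand F_def by (simp add: algebra_simps power2_eq_square power3_eq_cube)
    then show ?thesis using that by simp
  qed
  then have "eventually (\<lambda>t. F t = 0) (at 0)" by (auto simp: eventually_at_filter)
  then have "(F \<longlongrightarrow> 0) (at 0)" by (rule tendsto_eventually)
  with lim show ?thesis using tendsto_unique[OF at_neq_bot] by fastforce
qed



lemma dmat_mult: "dmat a b c ** dmat a' b' c' = dmat (a*a') (b*b') (c*c')"
  by (simp add: mat_simps)

lemma mat1_dmat: "(mat 1 :: mat3) = dmat 1 1 1"
  by (simp add: mat_simps)

lemma scale_dmat: "t *\<^sub>R dmat a b c = dmat (t*a) (t*b) (t*c)"
  by (simp add: mat_simps)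

lemma det_dmat: "det (dmat a b c) = a * b * c"
  by (simp add: det_3 dmat_def)

lemma mpow_dmat: "mpow (dmat a b c) k = dmat (a^k) (b^k) (c^k)"
  by (induction k) (simp_all add: mat1_dmat dmat_mult)

lemma mexp_dmat: "mexp (dmat a b c) = dmat (exp a) (exp b) (exp c)"
proof -
  have eq: "(1 / fact k) *\<^sub>R mpow (dmat a b c) k =
     (a^k / fact k) *\<^sub>R dmat 1 0 0 + (b^k / fact k) *\<^sub>R dmat 0 1 0 + (c^k / fact k) *\<^sub>R dmat 0 0 1" for k
    unfolding mpow_dmat by (simp add: mat_simps)
  have "(\<lambda>k. (a^k / fact k) *\<^sub>R dmat 1 0 0 + (b^k / fact k) *\<^sub>R dmat 0 1 0 + (c^k / fact k) *\<^sub>R dmat 0 0 1)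
     sums (exp a *\<^sub>R dmat 1 0 0 + exp b *\<^sub>R dmat 0 1 0 + exp c *\<^sub>R dmat 0 0 1)"
    by (intro sums_add sums_scaleR_left exp_real_sums)
  note S = this
  have "mexp (dmat a b c) = (\<Sum>k. (a^k / fact k) *\<^sub>R dmat 1 0 0 + (b^k / fact k) *\<^sub>R dmat 0 1 0 + (c^k / fact k) *\<^sub>R dmat 0 0 1)"
    unfolding mexp_def eq ..
  also have "\<dots> = exp a *\<^sub>R dmat 1 0 0 + exp b *\<^sub>R dmat 0 1 0 + exp c *\<^sub>R dmat 0 0 1"
    using S by (rule sums_unique[symmetric])
  also have "\<dots> = dmat (exp a) (exp b) (exp c)" by (simp add: mat_simps)
  finally show ?thesis .
qed

lemma matrix_mul_lzero_ext: "(0::mat3) ** A = 0"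
  by (simp add: vec_eq_iff matrix_matrix_mult_def)

lemma mexp_nil:
  assumes "N ** N = 0"
  shows "mexp N = mat 1 + N"
proof -
  have "mpow N (Suc (Suc k)) = 0" for k
    using assms by (simp add: matrix_mul_assoc matrix_mul_lzero_ext)
  then have z: "(1 / fact n) *\<^sub>R mpow N n = 0" if "n \<notin> {0,1}" for n
    using that by (cases n; cases "n - 1") auto
  have "(\<lambda>n. (1 / fact n) *\<^sub>R mpow N n) sums (\<Sum>n\<in>{0,1}. (1 / fact n) *\<^sub>R mpow N n)"
    by (rule sums_finite) (use z in auto)
  then show ?thesis unfolding mexp_def by (simp add: sums_iff matrix_mul_rid)
qed

definition emat :: "3 \<Rightarrow> 3 \<Rightarrow> mat3" where
  "emat i j = (\<chi> k l. if k = i \<and> l = j then 1 else 0)"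

lemma emat_sq: "i \<noteq> j \<Longrightarrow> (t *\<^sub>R emat i j) ** (t *\<^sub>R emat i j) = 0"
  by (auto simp: vec_eq_iff matrix_matrix_mult_def emat_def intro!: sum.neutral)

lemma det_emat: "i \<noteq> j \<Longrightarrow> det (mat 1 + t *\<^sub>R emat i j) = 1"
  using exhaust_3[of i] exhaust_3[of j]
  by (auto simp: det_3 mat_def emat_def)

lemma mexp_emat: "i \<noteq> j \<Longrightarrow> mexp (t *\<^sub>R emat i j) = mat 1 + t *\<^sub>R emat i j"
  by (rule mexp_nil[OF emat_sq])



lemma dim_sandwich: "L \<subseteq> span B \<Longrightarrow> B \<subseteq> L \<Longrightarrow> dim L = dim (B::mat3 set)"
  by (metis antisym dim_span dim_subset)

lemma inner_mat1: "(mat 1 :: mat3) \<bullet> X = X$1$1 + X$2$2 + X$3$3"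
  by (simp add: inner_vec_def sum_3 mat_def)

lemma exp_m2: "exp (t * (-2)) = 1 / (exp (t::real))^2"
  by (simp add: exp_double[symmetric] exp_minus inverse_eq_divide mult.commute)

lemma sl3_lie_mem: "X \<in> lie_alg SL3 \<longleftrightarrow> (\<forall>t. det (mexp (t *\<^sub>R X)) = 1)"
  by (simp add: lie_alg_def SL3_def)

lemma emat_in_sl3: "i \<noteq> j \<Longrightarrow> emat i j \<in> lie_alg SL3"
  by (simp add: sl3_lie_mem mexp_emat det_emat)

lemma dmat_in_sl3: "a + b + c = 0 \<Longrightarrow> dmat a b c \<in> lie_alg SL3"
  by (simp add: sl3_lie_mem scale_dmat mexp_dmat det_dmat exp_add[symmetric] distrib_left[symmetric])

lemma group_dim_SL3: "group_dim SL3 = 8"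
proof -
  let ?H = "{x. (mat 1 :: mat3) \<bullet> x = 0}"
  let ?L = "lie_alg SL3"
  have LH: "?L \<subseteq> ?H"
    using lie_trace by (auto simp: sl3_lie_mem inner_mat1)
  have HL: "?H \<subseteq> span ?L"
  proof
    fix X :: mat3 assume "X \<in> ?H"
    then have tr: "X$3$3 = - X$1$1 - X$2$2" by (simp add: inner_mat1)
    have eq: "X = X$1$2 *\<^sub>R emat 1 2 + X$1$3 *\<^sub>R emat 1 3 + X$2$1 *\<^sub>R emat 2 1 + X$2$3 *\<^sub>R emat 2 3
       + X$3$1 *\<^sub>R emat 3 1 + X$3$2 *\<^sub>R emat 3 2 + X$1$1 *\<^sub>R dmat 1 (-1) 0 + (X$1$1 + X$2$2) *\<^sub>R dmat 0 1 (-1)"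
      using tr by (simp add: vec_eq_iff forall_3 emat_def dmat_def)
    show "X \<in> span ?L"
      by (subst eq) (intro span_add span_scale span_base emat_in_sl3 dmat_in_sl3; simp)
  qed
  have "dim ?L = dim ?H"
    using LH HL by (metis antisym dim_span dim_subset)
  also have "\<dots> = 8"
    by (subst dim_hyperplane) (auto simp: mat_def vec_eq_iff)
  finally show ?thesis unfolding group_dim_def .
qed

lemma Dgrp_dmat: "dmat a b c \<in> Dgrp \<longleftrightarrow> a * b * c = 1"
  by (simp add: Dgrp_def SL3_def det_dmat) (simp add: dmat_def)

lemma Dgrp_elem: "A \<in> Dgrp \<Longrightarrow> \<exists>a b c. A = dmat a b c \<and> a * b * c = 1"
  apply (rule exI[of _ "A$1$1"], rule exI[of _ "A$2$2"], rule exI[of _ "A$3$3"])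
  by (auto simp: Dgrp_def SL3_def det_3 dmat_def vec_eq_iff forall_3)

lemma lie_D:
  assumes "X \<in> lie_alg H" "H \<subseteq> Dgrp"
  shows "X = dmat (X$1$1) (X$2$2) (X$3$3) \<and> X$1$1 + X$2$2 + X$3$3 = 0"
proof -
  have D: "mexp (t *\<^sub>R X) \<in> Dgrp" for t using assms by (auto simp: lie_alg_def)
  have "X$1$2 = 0" "X$1$3 = 0" "X$2$1 = 0" "X$2$3 = 0" "X$3$1 = 0" "X$3$2 = 0"
    by (rule lie_entry0; use D in \<open>simp add: Dgrp_def\<close>)+
  moreover have "X$1$1 + X$2$2 + X$3$3 = 0"
    by (rule lie_trace) (use D in \<open>simp add: Dgrp_def SL3_def\<close>)
  ultimately show ?thesis by (simp add: vec_eq_iff forall_3 dmat_def)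
qed

lemma group_dim_D: "group_dim Dgrp = 2"
proof -
  let ?A = "dmat 1 (-1) 0" and ?B = "dmat 0 1 (-1)"
  have sub: "lie_alg Dgrp \<subseteq> span {?A, ?B}"
  proof
    fix X assume "X \<in> lie_alg Dgrp"
    from lie_D[OF this] have "X = X$1$1 *\<^sub>R ?A + (X$1$1 + X$2$2) *\<^sub>R ?B"
      by (simp add: vec_eq_iff forall_3 dmat_def)
    then show "X \<in> span {?A, ?B}"
      by (metis insertI1 insertI2 singletonI span_add span_base span_scale)
  qed
  have mem: "{?A, ?B} \<subseteq> lie_alg Dgrp"
    by (auto simp: lie_alg_def scale_dmat mexp_dmat Dgrp_dmat exp_add[symmetric])
  have ne: "?A \<noteq> ?B" by (simp add: dmat_def vec_eq_iff forall_3)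
  have ind: "independent {?A, ?B}"
  proof (rule independent_insertI)
    show "?A \<notin> span {?B}"
    proof
      assume "?A \<in> span {?B}"
      then obtain k where "?A = k *\<^sub>R ?B" by (auto simp: span_singleton)
      then show False by (simp add: dmat_def vec_eq_iff forall_3)
    qed
    show "independent {?B}" by (simp add: dmat_def vec_eq_iff forall_3)
  qed
  have "dim (lie_alg Dgrp) = dim {?A, ?B}" by (rule dim_sandwich[OF sub mem])
  also have "\<dots> = 2" using dim_eq_card_independent[OF ind] ne by simp
  finally show ?thesis unfolding group_dim_def .
qed

lemma group_dim_one: "group_dim {mat 1} = 0"
proof -
  have "lie_alg {mat 1} \<subseteq> {0}"
  proof
    fix X assume X: "X \<in> lie_alg {mat 1}"
    have "{mat 1} \<subseteq> Dgrp" by (simp add: mat1_dmat Dgrp_dmat)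
    from lie_D[OF X this] have d: "X = dmat (X$1$1) (X$2$2) (X$3$3)" by simp
    have M: "mexp (t *\<^sub>R X) = mat 1" for t using X by (simp add: lie_alg_def)
    have "X$i$i = 0" for i
      using lie_lin[of 1 X i i 0 i i] M by simp
    then show "X \<in> {0}" using d by (simp add: dmat_def vec_eq_iff forall_3)
  qed
  then show ?thesis unfolding group_dim_def
    by (metis dim_singleton dim_subset le_zero_eq)
qed



lemma dim_one_lemma:
  assumes "E \<noteq> 0" "E \<in> lie_alg K" "lie_alg K \<subseteq> span {E}"
  shows "group_dim K = 1"
  unfolding group_dim_def using dim_sandwich[OF assms(3)] assms(1,2) by simp

lemma exp_m2': "exp (-(t * 2)) = 1 / (exp (t::real))^2"
  using exp_m2[of t] by simp

lemma dmat_ne1: "a \<noteq> 0 \<Longrightarrow> dmat a b c \<noteq> 0"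
  by (metis vector_3(1) dmat_def zero_index)

lemma dmat_ne2: "b \<noteq> 0 \<Longrightarrow> dmat a b c \<noteq> 0"
  by (metis vector_3(2) dmat_def zero_index)

lemma inv_sq_prod: "a \<noteq> 0 \<Longrightarrow> a * a * (1 / a^2) = (1::real)"
  by (simp add: power2_eq_square)

lemma group_dim_K1: "group_dim {dmat a a (1 / a^2) | a. a \<noteq> 0} = 1"
proof (rule dim_one_lemma[of "dmat 1 1 (-2)"])
  let ?K = "{dmat a a (1 / a^2) | a. a \<noteq> 0}"
  show "dmat 1 1 (-2) \<noteq> 0" by (simp add: dmat_ne1 dmat_ne2)
  show "dmat 1 1 (-2) \<in> lie_alg ?K" unfolding lie_alg_def
  proof (rule CollectI, rule allI)
    fix t show "mexp (t *\<^sub>R dmat 1 1 (-2)) \<in> ?K"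
      using exp_m2'[of t] by (auto simp: scale_dmat mexp_dmat intro!: exI[of _ "exp t"])
  qed
  have KD: "?K \<subseteq> Dgrp" by (auto simp: Dgrp_dmat power2_eq_square)
  show "lie_alg ?K \<subseteq> span {dmat 1 1 (-2)}"
  proof (rule subsetI)
    fix X assume X: "X \<in> lie_alg ?K"
    note d = lie_D[OF X KD]
    have "X$1$1 = X$2$2"
    proof (rule lie_entry_eq)
      fix t
      from X obtain a where "mexp (t *\<^sub>R X) \<in> ?K" by (auto simp: lie_alg_def)
      then show "mexp (t *\<^sub>R X) $ 1 $ 1 = mexp (t *\<^sub>R X) $ 2 $ 2" by (auto simp: dmat_def)
    qed
    with d have "X = X$1$1 *\<^sub>R dmat 1 1 (-2)"
      by (simp add: vec_eq_iff forall_3 dmat_def)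
    then show "X \<in> span {dmat 1 1 (-2)}" by (metis singletonI span_base span_scale)
  qed
qed

lemma group_dim_K2: "group_dim {dmat a (1 / a^2) a | a. a \<noteq> 0} = 1"
proof (rule dim_one_lemma[of "dmat 1 (-2) 1"])
  let ?K = "{dmat a (1 / a^2) a | a. a \<noteq> 0}"
  show "dmat 1 (-2) 1 \<noteq> 0" by (simp add: dmat_ne1 dmat_ne2)
  show "dmat 1 (-2) 1 \<in> lie_alg ?K" unfolding lie_alg_def
  proof (rule CollectI, rule allI)
    fix t show "mexp (t *\<^sub>R dmat 1 (-2) 1) \<in> ?K"
      using exp_m2'[of t] by (auto simp: scale_dmat mexp_dmat intro!: exI[of _ "exp t"])
  qed
  have KD: "?K \<subseteq> Dgrp" by (auto simp: Dgrp_dmat power2_eq_square)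
  show "lie_alg ?K \<subseteq> span {dmat 1 (-2) 1}"
  proof (rule subsetI)
    fix X assume X: "X \<in> lie_alg ?K"
    note d = lie_D[OF X KD]
    have "X$1$1 = X$3$3"
    proof (rule lie_entry_eq)
      fix t
      from X obtain a where "mexp (t *\<^sub>R X) \<in> ?K" by (auto simp: lie_alg_def)
      then show "mexp (t *\<^sub>R X) $ 1 $ 1 = mexp (t *\<^sub>R X) $ 3 $ 3" by (auto simp: dmat_def)
    qed
    with d have "X = X$1$1 *\<^sub>R dmat 1 (-2) 1"
      by (simp add: vec_eq_iff forall_3 dmat_def)
    then show "X \<in> span {dmat 1 (-2) 1}" by (metis singletonI span_base span_scale)
  qed
qed

lemma group_dim_K3: "group_dim {dmat (1 / a^2) a a | a. a \<noteq> 0} = 1"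
proof (rule dim_one_lemma[of "dmat (-2) 1 1"])
  let ?K = "{dmat (1 / a^2) a a | a. a \<noteq> 0}"
  show "dmat (-2) 1 1 \<noteq> 0" by (simp add: dmat_ne1 dmat_ne2)
  show "dmat (-2) 1 1 \<in> lie_alg ?K" unfolding lie_alg_def
  proof (rule CollectI, rule allI)
    fix t show "mexp (t *\<^sub>R dmat (-2) 1 1) \<in> ?K"
      using exp_m2'[of t] by (auto simp: scale_dmat mexp_dmat intro!: exI[of _ "exp t"])
  qed
  have KD: "?K \<subseteq> Dgrp" by (auto simp: Dgrp_dmat power2_eq_square)
  show "lie_alg ?K \<subseteq> span {dmat (-2) 1 1}"
  proof (rule subsetI)
    fix X assume X: "X \<in> lie_alg ?K"
    note d = lie_D[OF X KD]
    have "X$2$2 = X$3$3"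
    proof (rule lie_entry_eq)
      fix t
      from X obtain a where "mexp (t *\<^sub>R X) \<in> ?K" by (auto simp: lie_alg_def)
      then show "mexp (t *\<^sub>R X) $ 2 $ 2 = mexp (t *\<^sub>R X) $ 3 $ 3" by (auto simp: dmat_def)
    qed
    with d have "X = X$2$2 *\<^sub>R dmat (-2) 1 1"
      by (simp add: vec_eq_iff forall_3 dmat_def)
    then show "X \<in> span {dmat (-2) 1 1}" by (metis singletonI span_base span_scale)
  qed
qed



lemma P_entries: "p \<in> Pgrp \<Longrightarrow> p$2$1 = 0 \<and> p$3$1 = 0 \<and> p$3$2 = 0 \<and> p$1$1 * p$2$2 * p$3$3 = 1"
  by (auto simp: Pgrp_def SL3_def det_3)

lemma P_intro: "A$2$1 = 0 \<Longrightarrow> A$3$1 = 0 \<Longrightarrow> A$3$2 = 0 \<Longrightarrow> A$1$1 * A$2$2 * A$3$3 = 1 \<Longrightarrow> A \<in> Pgrp"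
  by (auto simp: Pgrp_def SL3_def det_3)

lemma P_mult: "p \<in> Pgrp \<Longrightarrow> q \<in> Pgrp \<Longrightarrow> p ** q \<in> Pgrp"
  by (auto simp: Pgrp_def SL3_def det_mul) (auto simp: matrix_matrix_mult_def sum_3)

lemma SL3_mult: "p \<in> SL3 \<Longrightarrow> q \<in> SL3 \<Longrightarrow> p ** q \<in> SL3"
  by (auto simp: SL3_def det_mul)

lemma P_SL3: "p \<in> Pgrp \<Longrightarrow> p \<in> SL3" by (simp add: Pgrp_def)

lemma one_P: "mat 1 \<in> Pgrp"
  by (auto simp: Pgrp_def SL3_def) (auto simp: mat_def)

definition uinv :: "mat3 \<Rightarrow> mat3" where
  "uinv p = vector [vector [1/p$1$1, - p$1$2/(p$1$1*p$2$2), (p$1$2*p$2$3 - p$1$3*p$2$2)/(p$1$1*p$2$2*p$3$3)],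
                    vector [0, 1/p$2$2, - p$2$3/(p$2$2*p$3$3)],
                    vector [0, 0, 1/p$3$3]]"

lemma uinv_props:
  assumes "p \<in> Pgrp"
  shows "uinv p \<in> Pgrp" "uinv p ** p = mat 1"
proof -
  from P_entries[OF assms] have e: "p$2$1 = 0" "p$3$1 = 0" "p$3$2 = 0" "p$1$1 * p$2$2 * p$3$3 = 1" by auto
  then have nz: "p$1$1 \<noteq> 0" "p$2$2 \<noteq> 0" "p$3$3 \<noteq> 0" by auto
  show "uinv p \<in> Pgrp"
    by (rule P_intro) (use e nz in \<open>simp_all add: uinv_def field_simps\<close>)
  show "uinv p ** p = mat 1"
    using e nz by (simp add: uinv_def mat_simps field_simps)
qed

lemma P_rmult_image: "p \<in> Pgrp \<Longrightarrow> (\<lambda>x. x ** p) ` Pgrp = Pgrp"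
proof
  assume p: "p \<in> Pgrp"
  show "(\<lambda>x. x ** p) ` Pgrp \<subseteq> Pgrp" using P_mult p by auto
  show "Pgrp \<subseteq> (\<lambda>x. x ** p) ` Pgrp"
  proof
    fix x assume x: "x \<in> Pgrp"
    have "x = (x ** uinv p) ** p" using uinv_props[OF p]
      by (simp add: matrix_mul_assoc[symmetric])
    moreover have "x ** uinv p \<in> Pgrp" using P_mult[OF x uinv_props(1)[OF p]] .
    ultimately show "x \<in> (\<lambda>x. x ** p) ` Pgrp" by blast
  qed
qed

lemma coset_mult: "p \<in> Pgrp \<Longrightarrow> coset (p ** b) = coset b"
proof -
  assume p: "p \<in> Pgrp"
  have "coset (p ** b) = (\<lambda>x. x ** b) ` ((\<lambda>x. x ** p) ` Pgrp)"
    unfolding coset_def image_image by (simp add: matrix_mul_assoc)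
  then show ?thesis using P_rmult_image[OF p] by (simp add: coset_def)
qed

lemma coset_eq_iff: "coset a = coset b \<longleftrightarrow> (\<exists>p\<in>Pgrp. a = p ** b)"
proof
  assume "coset a = coset b"
  moreover have "a \<in> coset a" unfolding coset_def using one_P by force
  ultimately show "\<exists>p\<in>Pgrp. a = p ** b" by (auto simp: coset_def)
next
  assume "\<exists>p\<in>Pgrp. a = p ** b"
  then show "coset a = coset b" using coset_mult by blast
qed

lemma coset_act_coset: "coset_act (coset a) g = coset (a ** g)"
  unfolding coset_act_def coset_def image_image by (simp add: matrix_mul_assoc)

lemma act_pt: "act (pt n) g = (coset g, coset (w0 ** g), coset ((w0 ** n) ** g))"
  by (simp add: act_def pt_def coset_act_coset)

lemma act_act: "act (act x g) h = act x (g ** h)"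
  by (auto simp: act_def coset_act_def image_image matrix_mul_assoc split: prod.splits)

lemma act_one: "act x (mat 1) = x"
  by (auto simp: act_def coset_act_def split: prod.splits)

lemma dmat_P: "a * b * c = 1 \<Longrightarrow> dmat a b c \<in> Pgrp"
  by (rule P_intro) (simp_all add: dmat_def)

lemma dmat_SL3: "a * b * c = 1 \<Longrightarrow> dmat a b c \<in> SL3"
  by (simp add: SL3_def det_dmat)

lemma w0_dmat: "w0 ** dmat a b c = dmat c b a ** w0"
  by (simp add: mat_simps)

lemma trans_char:
  assumes g: "g \<in> SL3"
  shows "act (pt (nmat x y z)) g = pt (nmat x' y' z') \<longleftrightarrow>
    (\<exists>a b c. g = dmat a b c \<and> a * b * c = 1 \<and> x * b = a * x' \<and> y * c = a * y' \<and> z * c = b * z')"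
proof
  assume A: "act (pt (nmat x y z)) g = pt (nmat x' y' z')"
  then have A': "(coset g, coset (w0 ** g), coset ((w0 ** nmat x y z) ** g)) = pt (nmat x' y' z')"
    by (simp only: act_pt)
  then have c1: "coset g = coset (mat 1)" and c2: "coset (w0 ** g) = coset w0"
    and c3: "coset ((w0 ** nmat x y z) ** g) = coset (w0 ** nmat x' y' z')"
    by (simp_all add: pt_def)
  from c1 obtain p where p: "p \<in> Pgrp" "g = p ** mat 1" by (auto simp: coset_eq_iff)
  then have gP: "g \<in> Pgrp" by simp
  from c2 obtain p' where p': "p' \<in> Pgrp" "w0 ** g = p' ** w0" by (auto simp: coset_eq_iff)
  from c3 obtain q where q: "q \<in> Pgrp" "(w0 ** nmat x y z) ** g = q ** (w0 ** nmat x' y' z')"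
    by (auto simp: coset_eq_iff)
  note ge = P_entries[OF gP] and pe = P_entries[OF p'(1)] and qe = P_entries[OF q(1)]
  have "(w0 ** g) $ i $ j = (p' ** w0) $ i $ j" for i j using p'(2) by simp
  from this[of 3 2] this[of 3 3] this[of 2 3] ge pe
  have g0: "g$1$2 = 0" "g$1$3 = 0" "g$2$3 = 0"
    by (simp_all add: matrix_matrix_mult_def sum_3 w0_def)
  define a b c where "a = g$1$1" "b = g$2$2" "c = g$3$3"
  have gd: "g = dmat a b c" using g0 ge unfolding a_b_c_def by (simp add: mat_simps)
  have abc: "a * b * c = 1" using ge unfolding a_b_c_def by simp
  have "((w0 ** nmat x y z) ** g) $ i $ j = (q ** (w0 ** nmat x' y' z')) $ i $ j" for i j using q(2) by simp
  from this[of 3 1] this[of 3 2] this[of 3 3] this[of 2 1] this[of 2 2] this[of 2 3] qe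
  have "q$3$3 = a" "x * b = q$3$3 * x'" "y * c = q$3$3 * y'" "q$2$3 = 0" "q$2$2 = b" "z * c = q$2$2 * z' + q$2$3 * y'"
    unfolding gd by (simp_all add: mat_simps)
  then have "x * b = a * x' \<and> y * c = a * y' \<and> z * c = b * z'" by simp
  with gd abc show "\<exists>a b c. g = dmat a b c \<and> a * b * c = 1 \<and> x * b = a * x' \<and> y * c = a * y' \<and> z * c = b * z'"
    by blast
next
  assume "\<exists>a b c. g = dmat a b c \<and> a * b * c = 1 \<and> x * b = a * x' \<and> y * c = a * y' \<and> z * c = b * z'"
  then obtain a b c where gd: "g = dmat a b c" and abc: "a * b * c = 1"
    and r: "x * b = a * x'" "y * c = a * y'" "z * c = b * z'" by blast
  have cP: "dmat c b a \<in> Pgrp" using abc by (intro dmat_P) (simp add: mult_ac)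
  have "coset g = coset (mat 1)" using dmat_P[OF abc] gd by (metis coset_mult matrix_mul_rid)
  moreover have "coset (w0 ** g) = coset w0" unfolding gd w0_dmat using coset_mult[OF cP] .
  moreover have "(w0 ** nmat x y z) ** g = dmat c b a ** (w0 ** nmat x' y' z')"
    unfolding gd using r by (simp add: mat_simps mult_ac)
  then have "coset ((w0 ** nmat x y z) ** g) = coset (w0 ** nmat x' y' z')" using coset_mult[OF cP] by simp
  ultimately show "act (pt (nmat x y z)) g = pt (nmat x' y' z')" unfolding act_pt by (simp add: pt_def)
qed



lemma stab_char: "stab (pt (nmat x y z)) =
  {dmat a b c | a b c. a * b * c = 1 \<and> x * b = a * x \<and> y * c = a * y \<and> z * c = b * z}"
proof (intro set_eqI iffI)
  fix g :: mat3 assume "g \<in> stab (pt (nmat x y z))"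
  then have "g \<in> SL3" "act (pt (nmat x y z)) g = pt (nmat x y z)" by (auto simp: stab_def)
  then show "g \<in> {dmat a b c | a b c. a * b * c = 1 \<and> x * b = a * x \<and> y * c = a * y \<and> z * c = b * z}"
    using trans_char by blast
next
  fix g :: mat3 assume "g \<in> {dmat a b c | a b c. a * b * c = 1 \<and> x * b = a * x \<and> y * c = a * y \<and> z * c = b * z}"
  then obtain a b c where "g = dmat a b c" "a * b * c = 1" "x * b = a * x" "y * c = a * y" "z * c = b * z" by blast
  moreover then have "g \<in> SL3" using dmat_SL3 by simp
  ultimately show "g \<in> stab (pt (nmat x y z))" unfolding stab_def using trans_char by blast
qed

lemma cube1: "a * a * a = 1 \<Longrightarrow> a = (1::real)"
proof -
  assume "a * a * a = 1"
  then have "a ^ 3 = 1" by (simp add: power3_eq_cube)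
  then have "root 3 (a ^ 3) = root 3 1" by simp
  then show ?thesis by (simp add: odd_real_root_power_cancel)
qed

lemma stab_triv:
  assumes "\<And>a b c. a * b * c = 1 \<Longrightarrow> x * b = a * x \<Longrightarrow> y * c = a * y \<Longrightarrow> z * c = b * z \<Longrightarrow> b = a \<and> c = a"
  shows "stab (pt (nmat x y z)) = {mat 1}"
  unfolding stab_char
proof (intro set_eqI iffI)
  fix g :: mat3 assume "g \<in> {dmat a b c | a b c. a * b * c = 1 \<and> x * b = a * x \<and> y * c = a * y \<and> z * c = b * z}"
  then obtain a b c where g: "g = dmat a b c" "a * b * c = 1" "x * b = a * x" "y * c = a * y" "z * c = b * z" by blast
  from assms[OF g(2-5)] have ba: "b = a" "c = a" by auto
  with g(2) have "a * a * a = 1" by simp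
  then have "a = 1" by (rule cube1)
  with g(1) ba show "g \<in> {mat 1}" by (simp add: mat1_dmat)
next
  fix g :: mat3 assume "g \<in> {mat 1}"
  then show "g \<in> {dmat a b c | a b c. a * b * c = 1 \<and> x * b = a * x \<and> y * c = a * y \<and> z * c = b * z}"
  proof -
    from \<open>g \<in> {mat 1}\<close> have "g = dmat 1 1 1" by (simp add: mat1_dmat)
    moreover have "(1::real)*1*1 = 1 \<and> x*1 = 1*x \<and> y*1 = 1*y \<and> z*1 = 1*z" by simp
    ultimately show ?thesis by blast
  qed
qed

lemma nonzero_abc: "a * b * c = (1::real) \<Longrightarrow> a \<noteq> 0 \<and> b \<noteq> 0 \<and> c \<noteq> 0" by auto

lemma stab_11u: "u \<noteq> 0 \<Longrightarrow> stab (pt (nmat 1 1 u)) = {mat 1}"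
  by (rule stab_triv) (auto dest: nonzero_abc)
lemma stab_011: "stab (pt (nmat 0 1 1)) = {mat 1}"
  by (rule stab_triv) auto
lemma stab_101: "stab (pt (nmat 1 0 1)) = {mat 1}"
  by (rule stab_triv) auto
lemma stab_110: "stab (pt (nmat 1 1 0)) = {mat 1}"
  by (rule stab_triv) auto

lemma stab_100: "stab (pt (nmat 1 0 0)) = {dmat a a (1 / a^2) | a. a \<noteq> 0}"
  unfolding stab_char
proof (intro set_eqI iffI)
  fix g :: mat3 assume "g \<in> {dmat a b c | a b c. a * b * c = 1 \<and> 1 * b = a * 1 \<and> 0 * c = a * 0 \<and> 0 * c = b * 0}"
  then obtain a b c where g: "g = dmat a b c" "a * b * c = 1" "b = a" by auto
  then have nz: "a \<noteq> 0" by auto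
  with g have "c = 1 / a^2" by (auto simp: field_simps power2_eq_square)
  note nz this
  with g nz show "g \<in> {dmat a a (1 / a^2) | a. a \<noteq> 0}" by (auto simp: power2_eq_square)
next
  fix g :: mat3 assume "g \<in> {dmat a a (1 / a^2) | a. a \<noteq> 0}"
  then obtain a where g: "g = dmat a a (1 / a^2)" "a \<noteq> 0" by auto
  moreover have "a * a * (1 / a^2) = 1 \<and> 1 * a = a * 1 \<and> 0 * (1 / a^2) = a * 0 \<and> 0 * (1 / a^2) = a * 0" using g(2) by (simp add: power2_eq_square)
  ultimately show "g \<in> {dmat a b c | a b c. a * b * c = 1 \<and> 1 * b = a * 1 \<and> 0 * c = a * 0 \<and> 0 * c = b * 0}"
    by blast
qed

lemma stab_010: "stab (pt (nmat 0 1 0)) = {dmat a (1 / a^2) a | a. a \<noteq> 0}"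
  unfolding stab_char
proof (intro set_eqI iffI)
  fix g :: mat3 assume "g \<in> {dmat a b c | a b c. a * b * c = 1 \<and> 0 * b = a * 0 \<and> 1 * c = a * 1 \<and> 0 * c = b * 0}"
  then obtain a b c where g: "g = dmat a b c" "a * b * c = 1" "c = a" by auto
  then have nz: "a \<noteq> 0" by auto
  with g have "b = 1 / a^2" by (auto simp: field_simps power2_eq_square)
  note nz this
  with g nz show "g \<in> {dmat a (1 / a^2) a | a. a \<noteq> 0}" by (auto simp: power2_eq_square)
next
  fix g :: mat3 assume "g \<in> {dmat a (1 / a^2) a | a. a \<noteq> 0}"
  then obtain a where g: "g = dmat a (1 / a^2) a" "a \<noteq> 0" by auto
  moreover have "a * (1 / a^2) * a = 1 \<and> 0 * (1 / a^2) = a * 0 \<and> 1 * a = a * 1 \<and> 0 * a = (1 / a^2) * 0" using g(2) by (simp add: power2_eq_square)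
  ultimately show "g \<in> {dmat a b c | a b c. a * b * c = 1 \<and> 0 * b = a * 0 \<and> 1 * c = a * 1 \<and> 0 * c = b * 0}"
    by blast
qed

lemma stab_001: "stab (pt (nmat 0 0 1)) = {dmat (1 / a^2) a a | a. a \<noteq> 0}"
  unfolding stab_char
proof (intro set_eqI iffI)
  fix g :: mat3 assume "g \<in> {dmat a b c | a b c. a * b * c = 1 \<and> 0 * b = a * 0 \<and> 0 * c = a * 0 \<and> 1 * c = b * 1}"
  then obtain a b c where g: "g = dmat a b c" "a * b * c = 1" "c = b" by auto
  then have nz: "b \<noteq> 0" by auto
  with g have "a = 1 / b^2" by (auto simp: field_simps power2_eq_square)
  note nz this
  with g nz show "g \<in> {dmat (1 / a^2) a a | a. a \<noteq> 0}" by (auto simp: power2_eq_square)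
next
  fix g :: mat3 assume "g \<in> {dmat (1 / a^2) a a | a. a \<noteq> 0}"
  then obtain a where g: "g = dmat (1 / a^2) a a" "a \<noteq> 0" by auto
  moreover have "(1 / a^2) * a * a = 1 \<and> 0 * a = (1 / a^2) * 0 \<and> 0 * a = (1 / a^2) * 0 \<and> 1 * a = a * 1" using g(2) by (simp add: power2_eq_square)
  ultimately show "g \<in> {dmat a b c | a b c. a * b * c = 1 \<and> 0 * b = a * 0 \<and> 0 * c = a * 0 \<and> 1 * c = b * 1}"
    by blast
qed

lemma stab_000: "stab (pt (nmat 0 0 0)) = Dgrp"
  unfolding stab_char
proof (intro set_eqI iffI)
  fix g :: mat3 assume "g \<in> {dmat a b c | a b c. a * b * c = 1 \<and> 0 * b = a * 0 \<and> 0 * c = a * 0 \<and> 0 * c = b * 0}"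
  then obtain a b c where "g = dmat a b c" "a * b * c = 1" by blast
  then show "g \<in> Dgrp" using Dgrp_dmat by simp
next
  fix g :: mat3 assume "g \<in> Dgrp"
  then obtain a b c where g: "g = dmat a b c" "a * b * c = 1" using Dgrp_elem by blast
  moreover have "0 * b = a * 0 \<and> 0 * c = a * 0 \<and> 0 * c = b * (0::real)" by simp
  ultimately show "g \<in> {dmat a b c | a b c. a * b * c = 1 \<and> 0 * b = a * 0 \<and> 0 * c = a * 0 \<and> 0 * c = b * 0}"
    by blast
qed



definition RepT :: "(real \<times> real \<times> real) set" where
  "RepT = {(1,1,u) | u. u \<noteq> 0} \<union> {(0,1,1),(1,0,1),(1,1,0),(1,0,0),(0,1,0),(0,0,1),(0,0,0)}"

lemma nmat_inj: "nmat x y z = nmat x' y' z' \<longleftrightarrow> x = x' \<and> y = y' \<and> z = z'"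
proof
  assume e: "nmat x y z = nmat x' y' z'"
  have "nmat x y z $1$2 = nmat x' y' z' $1$2" "nmat x y z $1$3 = nmat x' y' z' $1$3"
       "nmat x y z $2$3 = nmat x' y' z' $2$3" using e by simp_all
  then show "x = x' \<and> y = y' \<and> z = z'" by (simp add: nmat_def)
qed simp

lemma rigid:
  assumes "(x,y,z) \<in> RepT" "(x',y',z') \<in> RepT" "a * b * c = 1"
    "x * b = a * x'" "y * c = a * y'" "z * c = b * z'"
  shows "x = x' \<and> y = y' \<and> z = z'"
proof -
  have nz: "a \<noteq> 0" "b \<noteq> 0" "c \<noteq> 0" using assms(3) by auto
  have zx: "x = 0 \<longleftrightarrow> x' = 0" using assms(4) nz by auto
  have zy: "y = 0 \<longleftrightarrow> y' = 0" using assms(5) nz by auto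
  have zz: "z = 0 \<longleftrightarrow> z' = 0" using assms(6) nz by auto
  show ?thesis
  proof (cases "(x,y,z) \<in> {(1,1,u) | u. u \<noteq> 0}")
    case True
    then obtain u where u: "x = 1" "y = 1" "z = u" "u \<noteq> 0" by auto
    then have "x' \<noteq> 0" "y' \<noteq> 0" "z' \<noteq> 0" using zx zy zz by auto
    then obtain u' where u': "x' = 1" "y' = 1" "z' = u'" using assms(2) by (auto simp: RepT_def)
    have "b = a" "c = a" using assms(4,5) u u' by auto
    then have "u = u'" using assms(6) u u' nz by auto
    then show ?thesis using u u' by simp
  next
    case False
    then have A: "(x,y,z) \<in> {(0,1,1),(1,0,1),(1,1,0),(1,0,0),(0,1,0),(0,0,1),(0,0,0)}"
      using assms(1) by (auto simp: RepT_def)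
    then have B: "x \<in> {0,1} \<and> y \<in> {0,1} \<and> z \<in> {0,1}" and nn: "x = 0 \<or> y = 0 \<or> z = 0" by auto
    have "(x',y',z') \<notin> {(1,1,u) | u. u \<noteq> 0}" using nn zx zy zz by auto
    then have "(x',y',z') \<in> {(0,1,1),(1,0,1),(1,1,0),(1,0,0),(0,1,0),(0,0,1),(0,0,0)}"
      using assms(2) unfolding RepT_def by blast
    then have B': "x' \<in> {0,1} \<and> y' \<in> {0,1} \<and> z' \<in> {0,1}" by auto
    from B B' zx zy zz show ?thesis by auto
  qed
qed

lemma root_ex: "s \<noteq> 0 \<Longrightarrow> t \<noteq> 0 \<Longrightarrow> \<exists>a::real. a * (s * a) * (t * (s * a)) = 1"
proof -
  assume "s \<noteq> 0" "t \<noteq> 0"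
  define a where "a = root 3 (1 / (s^2 * t))"
  have "a ^ 3 = 1 / (s^2 * t)" unfolding a_def by (simp add: odd_real_root_pow)
  then have "a * (s * a) * (t * (s * a)) = 1" using \<open>s \<noteq> 0\<close> \<open>t \<noteq> 0\<close>
    by (simp add: power3_eq_cube power2_eq_square field_simps)
  then show ?thesis by blast
qed

lemma cover_st: "\<exists>x0 y0 z0 s t. (x0,y0,z0) \<in> RepT \<and> s \<noteq> 0 \<and> t \<noteq> 0 \<and>
    x0 * s = x \<and> y0 * s * t = y \<and> z0 * t = (z::real)"
proof (cases "x = 0")
  case x: True
  show ?thesis
  proof (cases "z = 0")
    case z: True
    show ?thesis
    proof (cases "y = 0")
      case True
      then show ?thesis using x z by (intro exI[of _ 0] exI[of _ 0] exI[of _ 0] exI[of _ 1] exI[of _ 1]) (simp add: RepT_def)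
    next
      case False
      then show ?thesis using x z by (intro exI[of _ 0] exI[of _ 1] exI[of _ 0] exI[of _ y] exI[of _ 1]) (simp add: RepT_def)
    qed
  next
    case z: False
    show ?thesis
    proof (cases "y = 0")
      case True
      then show ?thesis using x z by (intro exI[of _ 0] exI[of _ 0] exI[of _ 1] exI[of _ 1] exI[of _ z]) (simp add: RepT_def)
    next
      case False
      then show ?thesis using x z by (intro exI[of _ 0] exI[of _ 1] exI[of _ 1] exI[of _ "y / z"] exI[of _ z]) (simp add: RepT_def)
    qed
  qed
next
  case x: False
  show ?thesis
  proof (cases "z = 0")
    case z: True
    show ?thesis
    proof (cases "y = 0")
      case True
      then show ?thesis using x z by (intro exI[of _ 1] exI[of _ 0] exI[of _ 0] exI[of _ x] exI[of _ 1]) (simp add: RepT_def)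
    next
      case False
      then show ?thesis using x z by (intro exI[of _ 1] exI[of _ 1] exI[of _ 0] exI[of _ x] exI[of _ "y / x"]) (simp add: RepT_def)
    qed
  next
    case z: False
    show ?thesis
    proof (cases "y = 0")
      case True
      then show ?thesis using x z by (intro exI[of _ 1] exI[of _ 0] exI[of _ 1] exI[of _ x] exI[of _ z]) (simp add: RepT_def)
    next
      case False
      then show ?thesis using x z by (intro exI[of _ 1] exI[of _ 1] exI[of _ "x * z / y"] exI[of _ x] exI[of _ "y / x"]) (simp add: RepT_def)
    qed
  qed
qed

lemma cover_abc: "\<exists>x0 y0 z0 a b c. (x0,y0,z0) \<in> RepT \<and> a * b * c = 1 \<and>
    x0 * b = a * x \<and> y0 * c = a * y \<and> z0 * c = b * (z::real)"
proof -
  obtain x0 y0 z0 s t where r: "(x0,y0,z0) \<in> RepT" "s \<noteq> 0" "t \<noteq> 0"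
    "x0 * s = x" "y0 * s * t = y" "z0 * t = z" using cover_st by blast
  obtain a where a: "a * (s * a) * (t * (s * a)) = 1" using root_ex[OF r(2,3)] by blast
  have "x0 * (s * a) = a * x" "y0 * (t * (s * a)) = a * y" "z0 * (t * (s * a)) = (s * a) * z"
    using r(4-6) by (auto simp: algebra_simps)
  with r(1) a show ?thesis by blast
qed

lemma nmat_P: "nmat x y z \<in> Pgrp"
  by (rule P_intro) (simp_all add: nmat_def)

lemma nmat_mult: "nmat x y z ** nmat x' y' z' = nmat (x + x') (y + x * z' + y') (z + z')"
  by (simp add: mat_simps)

lemma P_decomp:
  assumes "p \<in> Pgrp"
  shows "p = dmat (p$1$1) (p$2$2) (p$3$3) ** nmat (p$1$2 / p$1$1) (p$1$3 / p$1$1) (p$2$3 / p$2$2)"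
proof -
  from P_entries[OF assms] have e: "p$2$1 = 0" "p$3$1 = 0" "p$3$2 = 0" "p$1$1 * p$2$2 * p$3$3 = 1" by auto
  then have nz: "p$1$1 \<noteq> 0" "p$2$2 \<noteq> 0" "p$3$3 \<noteq> 0" by auto
  show ?thesis using e nz by (simp add: mat_simps)
qed

lemma coset_w0_d: "a * b * c = 1 \<Longrightarrow> coset (w0 ** (dmat a b c ** M)) = coset (w0 ** M)"
proof -
  assume "a * b * c = 1"
  then have P: "dmat c b a \<in> Pgrp" by (intro dmat_P) (simp add: mult_ac)
  have "w0 ** (dmat a b c ** M) = dmat c b a ** (w0 ** M)"
    by (simp add: matrix_mul_assoc w0_dmat)
  then show ?thesis using coset_mult[OF P] by simp
qed

lemma coset_w0_P: "p \<in> Pgrp \<Longrightarrow> \<exists>x y z. coset (w0 ** p) = coset (w0 ** nmat x y z)"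
proof -
  assume p: "p \<in> Pgrp"
  have "p$1$1 * p$2$2 * p$3$3 = 1" using P_entries[OF p] by simp
  then show ?thesis using coset_w0_d P_decomp[OF p] by metis
qed



lemma pt_from_rep: "\<exists>x0 y0 z0 d. (x0,y0,z0) \<in> RepT \<and> d \<in> SL3 \<and> act (pt (nmat x0 y0 z0)) d = pt (nmat x y z)"
proof -
  obtain x0 y0 z0 a b c where r: "(x0,y0,z0) \<in> RepT" "a * b * c = 1"
    "x0 * b = a * x" "y0 * c = a * y" "z0 * c = b * z" using cover_abc by blast
  have "act (pt (nmat x0 y0 z0)) (dmat a b c) = pt (nmat x y z)"
    using trans_char[OF dmat_SL3[OF r(2)]] r by blast
  with r(1) dmat_SL3[OF r(2)] show ?thesis by blast
qed

lemma S_elem: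
  assumes "p \<in> Pgrp" "q \<in> Pgrp" "g \<in> SL3"
  shows "\<exists>x0 y0 z0 h. (x0,y0,z0) \<in> RepT \<and> h \<in> SL3 \<and>
     act (coset (mat 1), coset (w0 ** p), coset (w0 ** q)) g = act (pt (nmat x0 y0 z0)) h"
proof -
  obtain ux uy uz where cu: "coset (w0 ** p) = coset (w0 ** nmat ux uy uz)" using coset_w0_P[OF assms(1)] by blast
  obtain vx vy vz where cv: "coset (w0 ** q) = coset (w0 ** nmat vx vy vz)" using coset_w0_P[OF assms(2)] by blast
  define u where "u = nmat ux uy uz"
  define m where "m = nmat (vx - ux) (vy - (vx - ux) * uz - uy) (vz - uz)"
  have mu: "m ** u = nmat vx vy vz" unfolding m_def u_def nmat_mult by (simp add: algebra_simps)
  have uP: "u \<in> Pgrp" unfolding u_def by (rule nmat_P)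
  have "act (pt m) u = (coset u, coset (w0 ** u), coset ((w0 ** m) ** u))" by (rule act_pt)
  also have "coset u = coset (mat 1)" using coset_mult[OF uP, of "mat 1"] by simp
  also have "(w0 ** m) ** u = w0 ** nmat vx vy vz" by (simp add: matrix_mul_assoc[symmetric] mu)
  finally have "act (pt m) u = (coset (mat 1), coset (w0 ** p), coset (w0 ** q))"
    using cu cv unfolding u_def by simp
  then have e: "act (coset (mat 1), coset (w0 ** p), coset (w0 ** q)) g = act (pt m) (u ** g)"
    by (metis act_act)
  obtain x0 y0 z0 d where r: "(x0,y0,z0) \<in> RepT" "d \<in> SL3" "act (pt (nmat x0 y0 z0)) d = pt m"
    using pt_from_rep unfolding m_def by blast
  have "act (coset (mat 1), coset (w0 ** p), coset (w0 ** q)) g = act (pt (nmat x0 y0 z0)) (d ** (u ** g))"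
    using e r(3) by (metis act_act)
  moreover have "d ** (u ** g) \<in> SL3" using r(2) P_SL3[OF uP] assms(3) by (intro SL3_mult)
  ultimately show ?thesis using r(1) by blast
qed

lemma SL3_inv: "h \<in> SL3 \<Longrightarrow> \<exists>h'. h' \<in> SL3 \<and> h ** h' = mat 1"
proof -
  assume h: "h \<in> SL3"
  then have "invertible h" by (simp add: invertible_det_nz SL3_def)
  then obtain h' where h': "h ** h' = mat 1" unfolding invertible_def by blast
  then have "det h * det h' = 1" by (metis det_I det_mul)
  then have "det h' = 1" using h by (simp add: SL3_def)
  with h' show ?thesis by (auto simp: SL3_def)
qed

theorem mainTheorem5:
  defines "Reps \<equiv> {nmat 1 1 u | u. u \<noteq> 0} \<union>
     {nmat 0 1 1, nmat 1 0 1, nmat 1 1 0, nmat 1 0 0, nmat 0 1 0, nmat 0 0 1, nmat 0 0 0}"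
  shows
    "S_w0w0 = (\<Union>n\<in>Reps. orbit (pt n))
     \<and> (\<forall>n\<in>Reps. \<forall>m\<in>Reps. n \<noteq> m \<longrightarrow> orbit (pt n) \<inter> orbit (pt m) = {})
     \<and> group_dim SL3 = 8
     \<and> (\<forall>u::real. u \<noteq> 0 \<longrightarrow> orbit_dim (pt (nmat 1 1 u)) = 8)
     \<and> orbit_dim (pt (nmat 0 1 1)) = 8 \<and> stab (pt (nmat 0 1 1)) = {mat 1}
     \<and> orbit_dim (pt (nmat 1 0 1)) = 8 \<and> stab (pt (nmat 1 0 1)) = {mat 1}
     \<and> orbit_dim (pt (nmat 1 1 0)) = 8 \<and> stab (pt (nmat 1 1 0)) = {mat 1}
     \<and> orbit_dim (pt (nmat 1 0 0)) = 7
     \<and> stab (pt (nmat 1 0 0)) = {dmat a a (1 / a^2) | a. a \<noteq> 0}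
     \<and> orbit_dim (pt (nmat 0 1 0)) = 7
     \<and> stab (pt (nmat 0 1 0)) = {dmat a (1 / a^2) a | a. a \<noteq> 0}
     \<and> orbit_dim (pt (nmat 0 0 1)) = 7
     \<and> stab (pt (nmat 0 0 1)) = {dmat (1 / a^2) a a | a. a \<noteq> 0}
     \<and> orbit_dim (pt (nmat 0 0 0)) = 6
     \<and> stab (pt (nmat 0 0 0)) = Dgrp"
proof -
  have RepsE: "\<exists>x y z. n = nmat x y z \<and> (x,y,z) \<in> RepT" if "n \<in> Reps" for n
    using that unfolding Reps_def RepT_def by blast
  have RepsI: "nmat x y z \<in> Reps" if "(x,y,z) \<in> RepT" for x y z
    using that unfolding Reps_def RepT_def by blast
  have part1: "S_w0w0 = (\<Union>n\<in>Reps. orbit (pt n))"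
  proof
    show "S_w0w0 \<subseteq> (\<Union>n\<in>Reps. orbit (pt n))"
    proof
      fix e assume "e \<in> S_w0w0"
      then obtain p q g where pqg: "p \<in> Pgrp" "q \<in> Pgrp" "g \<in> SL3"
        and e: "e = act (coset (mat 1), coset (w0 ** p), coset (w0 ** q)) g"
        unfolding S_w0w0_def by blast
      from S_elem[OF pqg] e obtain x0 y0 z0 h where "(x0,y0,z0) \<in> RepT" "h \<in> SL3"
        "e = act (pt (nmat x0 y0 z0)) h" by blast
      then show "e \<in> (\<Union>n\<in>Reps. orbit (pt n))"
        using RepsI unfolding orbit_def by blast
    qed
    show "(\<Union>n\<in>Reps. orbit (pt n)) \<subseteq> S_w0w0"
    proof
      fix e assume "e \<in> (\<Union>n\<in>Reps. orbit (pt n))"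
      then obtain n g where n: "n \<in> Reps" "g \<in> SL3" "e = act (pt n) g"
        unfolding orbit_def by blast
      from RepsE[OF n(1)] obtain x y z where "n = nmat x y z" by blast
      then have nP: "n \<in> Pgrp" using nmat_P by simp
      have "e = act (coset (mat 1), coset (w0 ** mat 1), coset (w0 ** n)) g"
        using n(3) by (simp add: pt_def)
      then show "e \<in> S_w0w0" unfolding S_w0w0_def using one_P nP n(2) by blast
    qed
  qed
  have part2: "\<forall>n\<in>Reps. \<forall>m\<in>Reps. n \<noteq> m \<longrightarrow> orbit (pt n) \<inter> orbit (pt m) = {}"
  proof (intro ballI impI)
    fix n m assume nm: "n \<in> Reps" "m \<in> Reps" "n \<noteq> m"
    show "orbit (pt n) \<inter> orbit (pt m) = {}"
    proof (rule ccontr)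
      assume "orbit (pt n) \<inter> orbit (pt m) \<noteq> {}"
      then obtain g h where gh: "g \<in> SL3" "h \<in> SL3" "act (pt n) g = act (pt m) h"
        unfolding orbit_def by blast
      obtain h' where h': "h' \<in> SL3" "h ** h' = mat 1" using SL3_inv[OF gh(2)] by blast
      have "act (pt n) (g ** h') = act (act (pt n) g) h'" by (simp add: act_act)
      also have "\<dots> = act (pt m) (h ** h')" by (simp add: gh(3) act_act)
      also have "\<dots> = pt m" by (simp add: h'(2) act_one)
      finally have A: "act (pt n) (g ** h') = pt m" .
      obtain x y z where n': "n = nmat x y z" "(x,y,z) \<in> RepT" using RepsE[OF nm(1)] by blast
      obtain x' y' z' where m': "m = nmat x' y' z'" "(x',y',z') \<in> RepT" using RepsE[OF nm(2)] by blast
      from A n'(1) m'(1) obtain a b c where "a * b * c = 1"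
        "x * b = a * x'" "y * c = a * y'" "z * c = b * z'"
        using trans_char[OF SL3_mult[OF gh(1) h'(1)]] by blast
      with rigid[OF n'(2) m'(2)] have "x = x' \<and> y = y' \<and> z = z'" by blast
      with n'(1) m'(1) nm(3) show False by simp
    qed
  qed
  show ?thesis
    using part1 part2 group_dim_SL3 stab_11u stab_011 stab_101 stab_110 stab_100 stab_010 stab_001 stab_000
    by (simp add: orbit_dim_def group_dim_one group_dim_K1 group_dim_K2 group_dim_K3 group_dim_D)
qed

end
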